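(* Let $M$ be a duplicial module in a pre-additive category and $n\ge0$. Then $$\kappa_{n+1}s_{n,i}=\begin{cases}0,& i=0,\\ -s_{n,i-1}\kappa_n,& 1\le i\le n,\\ (s_{n,n+1}-s_{n,n})\kappa_n,& i=n+1.\end{cases}$$
   Context: Let $\mathcal A$ be a pre-additive category. Let $\Lambda_+$ be the category with objects $[n]$, $n\ge0$, where $\Lambda_+([m],[n])$ is the set of weakly monotone $f:\mathbb Z\to\mathbb Z$ with $f(j+m+1)=f(j)+n+1$ for all $j$ and $f(0)\ge0$. Define $\varepsilon^n_i:[n-1]\to[n]$ ($n\ge1$, $0\le i\le n$) by $\varepsilon^n_i(j)=j$ for $0\le j<i$, $j+1$ for $i\le j\le n-1$, and $\eta^n_i:[n+1]\to[n]$ ($0\le i\le n+1$) by $\eta^n_i(j)=j$ for $0\le j\le i$, $j-1$ for $i<j\le n+1$ (extended periodically). A duplicial module is a functor $M:\Lambda_+^{op}\to\mathcal A$; $M_n=M([n])$, $\partial_{n,i}=M(\varepsilon^n_i):M_n\to M_{n-1}$, $s_{n,i}=M(\eta^n_i):M_n\to M_{n+1}$. Convention $M_{-1}=0$, maps into/out of it zero. The Karoubi operator is $\kappa_n=(-1)^n(\partial_{n+1,0}s_{n,n+1}-s_{n-1,n}\partial_{n,0}):M_n\to M_n$ (so $\kappa_0=\partial_{1,0}s_{0,1}$). *)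

theory Defs
  imports Main
begin

record ('o,'m) preadd_cat =
  Hom  :: "'o \<Rightarrow> 'o \<Rightarrow> 'm set"
  Id   :: "'o \<Rightarrow> 'm"
  Comp :: "'m \<Rightarrow> 'm \<Rightarrow> 'm"
  Add  :: "'m \<Rightarrow> 'm \<Rightarrow> 'm"
  Zero :: "'o \<Rightarrow> 'o \<Rightarrow> 'm"
  Neg  :: "'m \<Rightarrow> 'm"

definition preadditive :: "('o,'m) preadd_cat \<Rightarrow> bool" where
  "preadditive C \<longleftrightarrow>
     (\<forall>a. Id C a \<in> Hom C a a) \<and>
     (\<forall>a b c f g. f \<in> Hom C a b \<longrightarrow> g \<in> Hom C b c \<longrightarrow> Comp C g f \<in> Hom C a c) \<and>
     (\<forall>a b f. f \<in> Hom C a b \<longrightarrow> Comp C f (Id C a) = f \<and> Comp C (Id C b) f = f) \<and>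
     (\<forall>a b c d f g h. f \<in> Hom C a b \<longrightarrow> g \<in> Hom C b c \<longrightarrow> h \<in> Hom C c d \<longrightarrow>
        Comp C h (Comp C g f) = Comp C (Comp C h g) f) \<and>
     (\<forall>a b. Zero C a b \<in> Hom C a b) \<and>
     (\<forall>a b f g. f \<in> Hom C a b \<longrightarrow> g \<in> Hom C a b \<longrightarrow> Add C f g \<in> Hom C a b) \<and>
     (\<forall>a b f. f \<in> Hom C a b \<longrightarrow> Neg C f \<in> Hom C a b) \<and>
     (\<forall>a b f g h. f \<in> Hom C a b \<longrightarrow> g \<in> Hom C a b \<longrightarrow> h \<in> Hom C a b \<longrightarrow>
        Add C (Add C f g) h = Add C f (Add C g h)) \<and>
     (\<forall>a b f g. f \<in> Hom C a b \<longrightarrow> g \<in> Hom C a b \<longrightarrow> Add C f g = Add C g f) \<and>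
     (\<forall>a b f. f \<in> Hom C a b \<longrightarrow> Add C (Zero C a b) f = f) \<and>
     (\<forall>a b f. f \<in> Hom C a b \<longrightarrow> Add C f (Neg C f) = Zero C a b) \<and>
     (\<forall>a b c f g g'. f \<in> Hom C a b \<longrightarrow> g \<in> Hom C b c \<longrightarrow> g' \<in> Hom C b c \<longrightarrow>
        Comp C (Add C g g') f = Add C (Comp C g f) (Comp C g' f)) \<and>
     (\<forall>a b c f f' g. f \<in> Hom C a b \<longrightarrow> f' \<in> Hom C a b \<longrightarrow> g \<in> Hom C b c \<longrightarrow>
        Comp C g (Add C f f') = Add C (Comp C g f) (Comp C g f'))"

text \<open>Morphisms of \<Lambda>_+ from [m] to [n]: weakly monotone f : Z \<rightarrow> Z with
  f(j+m+1) = f(j)+n+1 and f(0) \<ge> 0. Composition is function composition.\<close>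

definition lam_hom :: "nat \<Rightarrow> nat \<Rightarrow> (int \<Rightarrow> int) \<Rightarrow> bool" where
  "lam_hom m n f \<longleftrightarrow> mono f \<and> (\<forall>j. f (j + int m + 1) = f j + int n + 1) \<and> f 0 \<ge> 0"

text \<open>\<epsilon>^n_i : [n-1] \<rightarrow> [n] (n \<ge> 1), extended periodically (period n in the source).\<close>
definition eps :: "nat \<Rightarrow> nat \<Rightarrow> int \<Rightarrow> int" where
  "eps n i j = (let q = j div int n; r = j mod int n in
      q * (int n + 1) + (if r < int i then r else r + 1))"

text \<open>\<eta>^n_i : [n+1] \<rightarrow> [n], extended periodically (period n+2 in the source).\<close>
definition eta :: "nat \<Rightarrow> nat \<Rightarrow> int \<Rightarrow> int" where
  "eta n i j = (let q = j div (int n + 2); r = j mod (int n + 2) in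
      q * (int n + 1) + (if r \<le> int i then r else r - 1))"

text \<open>A duplicial module: a contravariant functor \<Lambda>_+ \<rightarrow> C, given by objects
  Mo n = M([n]) and the action Mf m n f = M(f) : M_n \<rightarrow> M_m for f : [m] \<rightarrow> [n].\<close>

definition duplicial ::
  "('o,'m) preadd_cat \<Rightarrow> (nat \<Rightarrow> 'o) \<Rightarrow> (nat \<Rightarrow> nat \<Rightarrow> (int \<Rightarrow> int) \<Rightarrow> 'm) \<Rightarrow> bool" where
  "duplicial C Mo Mf \<longleftrightarrow>
     (\<forall>m n f. lam_hom m n f \<longrightarrow> Mf m n f \<in> Hom C (Mo n) (Mo m)) \<and>
     (\<forall>n. Mf n n id = Id C (Mo n)) \<and>
     (\<forall>l m n f g. lam_hom l m f \<longrightarrow> lam_hom m n g \<longrightarrow>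
        Mf l n (g \<circ> f) = Comp C (Mf l m f) (Mf m n g))"

definition dface :: "(nat \<Rightarrow> nat \<Rightarrow> (int \<Rightarrow> int) \<Rightarrow> 'm) \<Rightarrow> nat \<Rightarrow> nat \<Rightarrow> 'm" where
  "dface Mf n i = Mf (n - 1) n (eps n i)"

definition sdeg :: "(nat \<Rightarrow> nat \<Rightarrow> (int \<Rightarrow> int) \<Rightarrow> 'm) \<Rightarrow> nat \<Rightarrow> nat \<Rightarrow> 'm" where
  "sdeg Mf n i = Mf (n + 1) n (eta n i)"

text \<open>Karoubi operator; for n = 0 the term through M_{-1} = 0 vanishes.\<close>
definition kappa ::
  "('o,'m) preadd_cat \<Rightarrow> (nat \<Rightarrow> nat \<Rightarrow> (int \<Rightarrow> int) \<Rightarrow> 'm) \<Rightarrow> nat \<Rightarrow> 'm" where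
  "kappa C Mf n =
     (if n = 0 then Comp C (dface Mf 1 0) (sdeg Mf 0 1)
      else (let x = Add C (Comp C (dface Mf (n + 1) 0) (sdeg Mf n (n + 1)))
                          (Neg C (Comp C (sdeg Mf (n - 1) n) (dface Mf n 0)))
            in if even n then x else Neg C x))"

end

theory Submission
  imports Defs
begin

definition per :: "int \<Rightarrow> int \<Rightarrow> (int \<Rightarrow> int) \<Rightarrow> bool" where
  "per p c f \<longleftrightarrow> (\<forall>j. f (j + p) = f j + c)"

lemma per_nat: assumes "per p c f" shows "f (j + int k * p) = f j + int k * c"
proof (induction k arbitrary: j)
  case 0 then show ?case by simp
next
  case (Suc k)
  have eq: "j + int (Suc k) * p = (j + int k * p) + p" by (simp add: algebra_simps)
  have h: "f ((j + int k * p) + p) = f (j + int k * p) + c" using assms unfolding per_def by blast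
  have "f (j + int (Suc k) * p) = f ((j + int k * p) + p)" by (simp only: eq)
  also have "\<dots> = f (j + int k * p) + c" using h .
  also have "\<dots> = f j + int (Suc k) * c" using Suc.IH by (simp add: algebra_simps)
  finally show ?case .
qed

lemma per_int: assumes "per p c f" shows "f (j + q * p) = f j + q * c"
proof (cases "q \<ge> 0")
  case True
  then obtain k where "q = int k" using nonneg_int_cases by blast
  then show ?thesis using per_nat[OF assms] by simp
next
  case False
  define k where "k = nat (- q)"
  have k: "q = - int k" using False k_def by simp
  have "f j = f ((j + q * p) + int k * p)" using k by (simp add: algebra_simps)
  also have "\<dots> = f (j + q*p) + int k * c" by (rule per_nat[OF assms])
  finally show ?thesis using k by (simp add: algebra_simps)
qed

lemma per_eq:
  assumes "p > 0" "per p c f" "per p c g" "\<And>r. 0 \<le> r \<Longrightarrow> r < p \<Longrightarrow> f r = g r"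
  shows "f = g"
proof
  fix j
  have j: "j = j mod p + (j div p) * p" by simp
  have "f j = f (j mod p) + (j div p) * c" using per_int[OF assms(2), of "j mod p" "j div p"] j by simp
  also have "\<dots> = g (j mod p) + (j div p) * c" using assms(1,4) by simp
  also have "\<dots> = g j" using per_int[OF assms(3), of "j mod p" "j div p"] j by simp
  finally show "f j = g j" .
qed

lemma step_mono: assumes "\<And>j. (f::int\<Rightarrow>int) j \<le> f (j+1)" shows "mono f"
proof (rule monoI)
  fix x y :: int assume "x \<le> y"
  then obtain k where y: "y = x + int k" by (metis le_iff_add nonneg_int_cases zle_iff_zadd)
  have "f x \<le> f (x + int k)"
  proof (induction k)
    case 0 then show ?case by simp
  next
    case (Suc k)
    have h: "f (x + int k) \<le> f (x + int k + 1)" by (rule assms)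
    have e: "x + int (Suc k) = x + int k + 1" by simp
    show ?case unfolding e using Suc.IH h by (rule order_trans)
  qed
  then show "f x \<le> f y" using y by simp
qed

lemma per_mono:
  assumes "p > 0" "per p c f" "\<And>r. 0 \<le> r \<Longrightarrow> r < p \<Longrightarrow> f r \<le> f (r+1)"
  shows "mono f"
proof (rule step_mono)
  fix j
  have j: "j = j mod p + (j div p) * p" by simp
  have "f j = f (j mod p) + (j div p) * c" using per_int[OF assms(2), of "j mod p" "j div p"] j by simp
  also have "\<dots> \<le> f (j mod p + 1) + (j div p) * c" using assms(1,3) by simp
  also have "\<dots> = f (j mod p + 1 + (j div p) * p)" using per_int[OF assms(2), of "j mod p + 1" "j div p"] by simp
  also have "\<dots> = f (j + 1)" using j by (metis add.commute add.left_commute)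
  finally show "f j \<le> f (j+1)" .
qed

lemma per_comp: "per p c f \<Longrightarrow> per c d g \<Longrightarrow> per p d (g \<circ> f)"
  unfolding per_def by simp

lemma eps_per: assumes "n > 0" shows "per (int n) (int n + 1) (eps n i)"
  unfolding per_def
proof
  fix j
  have "(j + int n) div int n = j div int n + 1" using assms by (intro div_add_self2) simp
  moreover have "(j + int n) mod int n = j mod int n" by simp
  ultimately show "eps n i (j + int n) = eps n i j + (int n + 1)"
    unfolding eps_def Let_def by (simp add: distrib_right)
qed

lemma eta_per: "per (int n + 2) (int n + 1) (eta n i)"
  unfolding per_def
proof
  fix j
  have "int n + 2 \<noteq> 0" by simp
  then have "(j + (int n + 2)) div (int n + 2) = j div (int n + 2) + 1" by (rule div_add_self2)
  moreover have "(j + (int n + 2)) mod (int n + 2) = j mod (int n + 2)" by simp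
  ultimately show "eta n i (j + (int n + 2)) = eta n i j + (int n + 1)"
    unfolding eta_def Let_def by (simp add: distrib_right)
qed

lemma eps_val: assumes "0 \<le> j" "j < 2 * int n"
  shows "eps n i j = (if j < int n then (if j < int i then j else j + 1)
     else int n + 1 + (if j - int n < int i then j - int n else j - int n + 1))"
proof (cases "j < int n")
  case True then show ?thesis using assms unfolding eps_def Let_def by simp
next
  case False
  then have n: "n > 0" using assms by simp
  have "eps n i j = eps n i ((j - int n) + int n)" by simp
  also have "\<dots> = eps n i (j - int n) + int n + 1" using eps_per[OF n] unfolding per_def by (metis add.assoc)
  moreover have "(j - int n) div int n = 0" "(j - int n) mod int n = j - int n"
    using False assms by (intro div_pos_pos_trivial mod_pos_pos_trivial; simp)+
  ultimately show ?thesis using False unfolding eps_def[of n i "j - int n"] Let_def by simp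
qed

lemma eta_val: assumes "0 \<le> j" "j < 2 * (int n + 2)"
  shows "eta n i j = (if j < int n + 2 then (if j \<le> int i then j else j - 1)
     else int n + 1 + (if j - (int n + 2) \<le> int i then j - (int n + 2) else j - (int n + 2) - 1))"
proof (cases "j < int n + 2")
  case True then show ?thesis using assms unfolding eta_def Let_def by simp
next
  case False
  have "eta n i j = eta n i ((j - (int n + 2)) + (int n + 2))" by simp
  also have "\<dots> = eta n i (j - (int n + 2)) + int n + 1" using eta_per unfolding per_def by (metis add.assoc)
  moreover have "(j - (int n + 2)) div (int n + 2) = 0" "(j - (int n + 2)) mod (int n + 2) = j - (int n + 2)"
    using False assms by (intro div_pos_pos_trivial mod_pos_pos_trivial; simp)+
  ultimately show ?thesis using False unfolding eta_def[of n i "j - (int n + 2)"] Let_def by simp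
qed

lemma lam_hom_per: "lam_hom m n f \<longleftrightarrow> mono f \<and> per (int m + 1) (int n + 1) f \<and> f 0 \<ge> 0"
  unfolding lam_hom_def per_def by (simp add: add.assoc)

lemma lam_hom_comp: assumes "lam_hom l m f" "lam_hom m n g" shows "lam_hom l n (g \<circ> f)"
proof -
  have f: "mono f" "per (int l + 1) (int m + 1) f" "f 0 \<ge> 0" using assms(1) unfolding lam_hom_per by auto
  have g: "mono g" "per (int m + 1) (int n + 1) g" "g 0 \<ge> 0" using assms(2) unfolding lam_hom_per by auto
  have "mono (g \<circ> f)" using f(1) g(1) unfolding mono_def by simp
  moreover have "per (int l + 1) (int n + 1) (g \<circ> f)" using per_comp[OF f(2) g(2)] .
  moreover have "g (f 0) \<ge> g 0" using g(1) f(3) by (simp add: monoD)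
  ultimately show ?thesis unfolding lam_hom_per using g(3) by simp
qed

lemma lam_hom_eps: assumes "n > 0" shows "lam_hom (n - 1) n (eps n i)"
proof -
  have p: "per (int (n-1) + 1) (int n + 1) (eps n i)" using eps_per[OF assms] assms by (simp add: of_nat_diff)
  have "mono (eps n i)"
    apply (rule per_mono[OF _ eps_per[OF assms]])
    using assms apply simp
    apply (subst eps_val, simp, simp)
    apply (subst eps_val, simp, simp)
    by auto
  then show ?thesis unfolding lam_hom_per using p by (simp add: eps_def)
qed

lemma lam_hom_eta: "lam_hom (n + 1) n (eta n i)"
proof -
  have e: "int (n+1) + 1 = int n + 2" by simp
  have p: "per (int (n+1) + 1) (int n + 1) (eta n i)" unfolding e by (rule eta_per)
  have "mono (eta n i)"
    apply (rule per_mono[OF _ eta_per])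
    apply simp
    apply (subst eta_val, simp, simp)
    apply (subst eta_val, simp, simp)
    by auto
  then show ?thesis unfolding lam_hom_per using p by (simp add: eta_def)
qed

lemma le1: "lam_hom (n+1) (n+2) (eps (n+2) i)" using lam_hom_eps[of "n+2" i] by simp
lemma le2: "lam_hom n (n+1) (eps (n+1) i)" using lam_hom_eps[of "n+1" i] by simp
lemma lt1: "lam_hom (n+2) (n+1) (eta (n+1) i)" using lam_hom_eta[of "n+1" i] by (simp add: add.assoc)
lemma lt3: "0 < n \<Longrightarrow> lam_hom n (n-1) (eta (n-1) i)" using lam_hom_eta[of "n-1" i] by simp

lemma perL: "lam_hom m n f \<Longrightarrow> per (int m + 1) (int n + 1) f" unfolding lam_hom_per by simp

lemma I0: "eta n 0 \<circ> eta (n+1) (n+2) \<circ> eps (n+2) 0 = eta n 0 \<circ> eps (n+1) 0 \<circ> eta n (n+1)"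
proof (rule per_eq)
  show "per (int (n+1) + 1) (int n + 1) (eta n 0 \<circ> eta (n+1) (n+2) \<circ> eps (n+2) 0)"
    by (rule perL, rule lam_hom_comp[OF le1 lam_hom_comp[OF lt1 lam_hom_eta]])
  show "per (int (n+1) + 1) (int n + 1) (eta n 0 \<circ> eps (n+1) 0 \<circ> eta n (n+1))"
    by (rule perL, rule lam_hom_comp[OF lam_hom_eta lam_hom_comp[OF le2 lam_hom_eta]])
  fix r :: int assume "0 \<le> r" "r < int (n+1) + 1"
  then show "(eta n 0 \<circ> eta (n+1) (n+2) \<circ> eps (n+2) 0) r = (eta n 0 \<circ> eps (n+1) 0 \<circ> eta n (n+1)) r"
    by (simp add: eps_val eta_val split: if_split)
qed simp

lemma IA: assumes "1 \<le> i" "i \<le> n"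
  shows "eta n i \<circ> eta (n+1) (n+2) \<circ> eps (n+2) 0 = eta n (n+1) \<circ> eps (n+1) 0 \<circ> eta n (i-1)"
proof (rule per_eq)
  show "per (int (n+1) + 1) (int n + 1) (eta n i \<circ> eta (n+1) (n+2) \<circ> eps (n+2) 0)"
    by (rule perL, rule lam_hom_comp[OF le1 lam_hom_comp[OF lt1 lam_hom_eta]])
  show "per (int (n+1) + 1) (int n + 1) (eta n (n+1) \<circ> eps (n+1) 0 \<circ> eta n (i-1))"
    by (rule perL, rule lam_hom_comp[OF lam_hom_eta lam_hom_comp[OF le2 lam_hom_eta]])
  fix r :: int assume "0 \<le> r" "r < int (n+1) + 1"
  then show "(eta n i \<circ> eta (n+1) (n+2) \<circ> eps (n+2) 0) r = (eta n (n+1) \<circ> eps (n+1) 0 \<circ> eta n (i-1)) r"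
    using assms by (simp add: eps_val eta_val of_nat_diff split: if_split)
qed simp

lemma IB: assumes "1 \<le> i" "i \<le> n"
  shows "eta n i \<circ> eps (n+1) 0 \<circ> eta n (n+1) = eps n 0 \<circ> eta (n-1) n \<circ> eta n (i-1)"
proof (rule per_eq)
  have n: "0 < n" using assms by simp
  show "per (int (n+1) + 1) (int n + 1) (eta n i \<circ> eps (n+1) 0 \<circ> eta n (n+1))"
    by (rule perL, rule lam_hom_comp[OF lam_hom_eta lam_hom_comp[OF le2 lam_hom_eta]])
  show "per (int (n+1) + 1) (int n + 1) (eps n 0 \<circ> eta (n-1) n \<circ> eta n (i-1))"
    by (rule perL, rule lam_hom_comp[OF lam_hom_eta lam_hom_comp[OF lt3[OF n] lam_hom_eps[OF n]]])
  fix r :: int assume "0 \<le> r" "r < int (n+1) + 1"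
  then show "(eta n i \<circ> eps (n+1) 0 \<circ> eta n (n+1)) r = (eps n 0 \<circ> eta (n-1) n \<circ> eta n (i-1)) r"
    using assms by (simp add: eps_val eta_val of_nat_diff split: if_split)
qed simp

lemma IY: "eta n (n+1) \<circ> eta (n+1) (n+2) \<circ> eps (n+2) 0 = eta n (n+1) \<circ> eps (n+1) 0 \<circ> eta n n"
proof (rule per_eq)
  show "per (int (n+1) + 1) (int n + 1) (eta n (n+1) \<circ> eta (n+1) (n+2) \<circ> eps (n+2) 0)"
    by (rule perL, rule lam_hom_comp[OF le1 lam_hom_comp[OF lt1 lam_hom_eta]])
  show "per (int (n+1) + 1) (int n + 1) (eta n (n+1) \<circ> eps (n+1) 0 \<circ> eta n n)"
    by (rule perL, rule lam_hom_comp[OF lam_hom_eta lam_hom_comp[OF le2 lam_hom_eta]])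
  fix r :: int assume "0 \<le> r" "r < int (n+1) + 1"
  then show "(eta n (n+1) \<circ> eta (n+1) (n+2) \<circ> eps (n+2) 0) r = (eta n (n+1) \<circ> eps (n+1) 0 \<circ> eta n n) r"
    by (simp add: eps_val eta_val split: if_split)
qed simp

lemma IX: assumes "1 \<le> n"
  shows "eps n 0 \<circ> eta (n-1) n \<circ> eta n (n+1) = eps n 0 \<circ> eta (n-1) n \<circ> eta n n"
proof (rule per_eq)
  have n: "0 < n" using assms by simp
  show "per (int (n+1) + 1) (int n + 1) (eps n 0 \<circ> eta (n-1) n \<circ> eta n (n+1))"
    by (rule perL, rule lam_hom_comp[OF lam_hom_eta lam_hom_comp[OF lt3[OF n] lam_hom_eps[OF n]]])
  show "per (int (n+1) + 1) (int n + 1) (eps n 0 \<circ> eta (n-1) n \<circ> eta n n)"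
    by (rule perL, rule lam_hom_comp[OF lam_hom_eta lam_hom_comp[OF lt3[OF n] lam_hom_eps[OF n]]])
  fix r :: int assume "0 \<le> r" "r < int (n+1) + 1"
  then show "(eps n 0 \<circ> eta (n-1) n \<circ> eta n (n+1)) r = (eps n 0 \<circ> eta (n-1) n \<circ> eta n n) r"
    using assms by (simp add: eps_val eta_val of_nat_diff split: if_split)
qed simp

context
  fixes C :: "('o,'m) preadd_cat"
  assumes PA: "preadditive C"
begin

lemma pcomp_closed: "f \<in> Hom C a b \<Longrightarrow> g \<in> Hom C b c \<Longrightarrow> Comp C g f \<in> Hom C a c"
  using PA[unfolded preadditive_def, THEN conjunct2, THEN conjunct1] by blast
lemma pcomp_assoc: "f \<in> Hom C a b \<Longrightarrow> g \<in> Hom C b c \<Longrightarrow> h \<in> Hom C c d \<Longrightarrow>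
        Comp C h (Comp C g f) = Comp C (Comp C h g) f"
  using PA[unfolded preadditive_def, THEN conjunct2, THEN conjunct2, THEN conjunct2, THEN conjunct1] by blast
lemma pzero_closed: "Zero C a b \<in> Hom C a b"
  using PA[unfolded preadditive_def, THEN conjunct2, THEN conjunct2, THEN conjunct2, THEN conjunct2, THEN conjunct1] by blast
lemma padd_closed: "f \<in> Hom C a b \<Longrightarrow> g \<in> Hom C a b \<Longrightarrow> Add C f g \<in> Hom C a b"
  using PA[unfolded preadditive_def, THEN conjunct2, THEN conjunct2, THEN conjunct2, THEN conjunct2, THEN conjunct2, THEN conjunct1] by blast
lemma pneg_closed: "f \<in> Hom C a b \<Longrightarrow> Neg C f \<in> Hom C a b"
  using PA[unfolded preadditive_def, THEN conjunct2, THEN conjunct2, THEN conjunct2, THEN conjunct2, THEN conjunct2, THEN conjunct2, THEN conjunct1] by blast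
lemma padd_assoc: "f \<in> Hom C a b \<Longrightarrow> g \<in> Hom C a b \<Longrightarrow> h \<in> Hom C a b \<Longrightarrow>
        Add C (Add C f g) h = Add C f (Add C g h)"
  using PA[unfolded preadditive_def, THEN conjunct2, THEN conjunct2, THEN conjunct2, THEN conjunct2, THEN conjunct2, THEN conjunct2, THEN conjunct2, THEN conjunct1] by blast
lemma padd_comm: "f \<in> Hom C a b \<Longrightarrow> g \<in> Hom C a b \<Longrightarrow> Add C f g = Add C g f"
  using PA[unfolded preadditive_def, THEN conjunct2, THEN conjunct2, THEN conjunct2, THEN conjunct2, THEN conjunct2, THEN conjunct2, THEN conjunct2, THEN conjunct2, THEN conjunct1] by blast
lemma pzero_add: "f \<in> Hom C a b \<Longrightarrow> Add C (Zero C a b) f = f"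
  using PA[unfolded preadditive_def, THEN conjunct2, THEN conjunct2, THEN conjunct2, THEN conjunct2, THEN conjunct2, THEN conjunct2, THEN conjunct2, THEN conjunct2, THEN conjunct2, THEN conjunct1] by blast
lemma padd_neg: "f \<in> Hom C a b \<Longrightarrow> Add C f (Neg C f) = Zero C a b"
  using PA[unfolded preadditive_def, THEN conjunct2, THEN conjunct2, THEN conjunct2, THEN conjunct2, THEN conjunct2, THEN conjunct2, THEN conjunct2, THEN conjunct2, THEN conjunct2, THEN conjunct2, THEN conjunct1] by blast
lemma pcomp_add_left: "f \<in> Hom C a b \<Longrightarrow> g \<in> Hom C b c \<Longrightarrow> g' \<in> Hom C b c \<Longrightarrow>
        Comp C (Add C g g') f = Add C (Comp C g f) (Comp C g' f)"
  using PA[unfolded preadditive_def, THEN conjunct2, THEN conjunct2, THEN conjunct2, THEN conjunct2, THEN conjunct2, THEN conjunct2, THEN conjunct2, THEN conjunct2, THEN conjunct2, THEN conjunct2, THEN conjunct2, THEN conjunct1] by blast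
lemma pcomp_add_right: "f \<in> Hom C a b \<Longrightarrow> f' \<in> Hom C a b \<Longrightarrow> g \<in> Hom C b c \<Longrightarrow>
        Comp C g (Add C f f') = Add C (Comp C g f) (Comp C g f')"
  using PA[unfolded preadditive_def, THEN conjunct2, THEN conjunct2, THEN conjunct2, THEN conjunct2, THEN conjunct2, THEN conjunct2, THEN conjunct2, THEN conjunct2, THEN conjunct2, THEN conjunct2, THEN conjunct2, THEN conjunct2] by blast

lemma padd_zero: "f \<in> Hom C a b \<Longrightarrow> Add C f (Zero C a b) = f"
  using padd_comm[of f a b "Zero C a b", OF _ pzero_closed] pzero_add[of f a b] by simp

lemma pneg_add_self: "f \<in> Hom C a b \<Longrightarrow> Add C (Neg C f) f = Zero C a b"
  using padd_comm[of "Neg C f" a b f, OF pneg_closed] padd_neg[of f a b] by simp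

lemma pneg_unique:
  assumes f: "f \<in> Hom C a b" and g: "g \<in> Hom C a b" and e: "Add C f g = Zero C a b"
  shows "g = Neg C f"
proof -
  have nf: "Neg C f \<in> Hom C a b" using f by (rule pneg_closed)
  have "g = Add C (Zero C a b) g" using g pzero_add by simp
  also have "\<dots> = Add C (Add C (Neg C f) f) g" using f pneg_add_self by simp
  also have "\<dots> = Add C (Neg C f) (Add C f g)" using padd_assoc[OF nf f g] .
  also have "\<dots> = Neg C f" using e padd_zero[OF nf] by simp
  finally show ?thesis .
qed

lemma pneg_neg: assumes f: "f \<in> Hom C a b" shows "Neg C (Neg C f) = f"
  using pneg_unique[OF pneg_closed[OF f] f pneg_add_self[OF f]] by simp

lemma pneg_zero: "Neg C (Zero C a b) = Zero C a b"
  using pneg_unique[OF pzero_closed pzero_closed pzero_add[OF pzero_closed]] by simp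

lemma pself_add_zero: assumes x: "x \<in> Hom C a b" and e: "Add C x x = x" shows "x = Zero C a b"
proof -
  have nx: "Neg C x \<in> Hom C a b" using x by (rule pneg_closed)
  have "x = Add C x (Zero C a b)" using padd_zero[OF x] by simp
  also have "\<dots> = Add C x (Add C x (Neg C x))" using padd_neg[OF x] by simp
  also have "\<dots> = Add C (Add C x x) (Neg C x)" using padd_assoc[OF x x nx] by simp
  also have "\<dots> = Zero C a b" using e padd_neg[OF x] by simp
  finally show ?thesis .
qed

lemma pcomp_zero_left: assumes f: "f \<in> Hom C a b" shows "Comp C (Zero C b c) f = Zero C a c"
proof (rule pself_add_zero)
  show h: "Comp C (Zero C b c) f \<in> Hom C a c" using pcomp_closed[OF f pzero_closed] .
  show "Add C (Comp C (Zero C b c) f) (Comp C (Zero C b c) f) = Comp C (Zero C b c) f"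
    using pcomp_add_left[OF f pzero_closed pzero_closed] pzero_add[OF pzero_closed] by simp
qed

lemma pcomp_zero_right: assumes g: "g \<in> Hom C b c" shows "Comp C g (Zero C a b) = Zero C a c"
proof (rule pself_add_zero)
  show h: "Comp C g (Zero C a b) \<in> Hom C a c" using pcomp_closed[OF pzero_closed g] .
  show "Add C (Comp C g (Zero C a b)) (Comp C g (Zero C a b)) = Comp C g (Zero C a b)"
    using pcomp_add_right[OF pzero_closed pzero_closed g] pzero_add[OF pzero_closed] by simp
qed

lemma pcomp_neg_left: assumes f: "f \<in> Hom C a b" and g: "g \<in> Hom C b c"
  shows "Comp C (Neg C g) f = Neg C (Comp C g f)"
proof (rule pneg_unique)
  show "Comp C g f \<in> Hom C a c" using pcomp_closed[OF f g] .
  show "Comp C (Neg C g) f \<in> Hom C a c" using pcomp_closed[OF f pneg_closed[OF g]] .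
  show "Add C (Comp C g f) (Comp C (Neg C g) f) = Zero C a c"
    using pcomp_add_left[OF f g pneg_closed[OF g], symmetric] padd_neg[OF g] pcomp_zero_left[OF f] by simp
qed

lemma pcomp_neg_right: assumes f: "f \<in> Hom C a b" and g: "g \<in> Hom C b c"
  shows "Comp C g (Neg C f) = Neg C (Comp C g f)"
proof (rule pneg_unique)
  show "Comp C g f \<in> Hom C a c" using pcomp_closed[OF f g] .
  show "Comp C g (Neg C f) \<in> Hom C a c" using pcomp_closed[OF pneg_closed[OF f] g] .
  show "Add C (Comp C g f) (Comp C g (Neg C f)) = Zero C a c"
    using pcomp_add_right[OF f pneg_closed[OF f] g, symmetric] padd_neg[OF f] pcomp_zero_right[OF g] by simp
qed

lemma pneg_add: assumes f: "f \<in> Hom C a b" and g: "g \<in> Hom C a b"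
  shows "Neg C (Add C f g) = Add C (Neg C f) (Neg C g)"
proof (rule pneg_unique[symmetric])
  have nf: "Neg C f \<in> Hom C a b" and ng: "Neg C g \<in> Hom C a b" using f g by (simp_all add: pneg_closed)
  show "Add C f g \<in> Hom C a b" using padd_closed[OF f g] .
  show "Add C (Neg C f) (Neg C g) \<in> Hom C a b" using padd_closed[OF nf ng] .
  have "Add C (Add C f g) (Add C (Neg C f) (Neg C g)) = Add C f (Add C g (Add C (Neg C f) (Neg C g)))"
    using padd_assoc[OF f g padd_closed[OF nf ng]] .
  also have "Add C g (Add C (Neg C f) (Neg C g)) = Add C (Neg C f) (Add C g (Neg C g))"
    using padd_assoc[OF g nf ng, symmetric] padd_comm[OF g nf] padd_assoc[OF nf g ng] by simp
  also have "\<dots> = Neg C f" using padd_neg[OF g] padd_zero[OF nf] by simp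
  finally show "Add C (Add C f g) (Add C (Neg C f) (Neg C g)) = Zero C a b" using padd_neg[OF f] by simp
qed

lemma pneg_diff: assumes x: "x \<in> Hom C a b" and y: "y \<in> Hom C a b"
  shows "Neg C (Add C x (Neg C y)) = Add C y (Neg C x)"
  using pneg_add[OF x pneg_closed[OF y]] pneg_neg[OF y] padd_comm[OF pneg_closed[OF x] y] by simp

lemma pdiff_diff: assumes a: "a' \<in> Hom C a b" and b: "b' \<in> Hom C a b" and x: "x \<in> Hom C a b"
  shows "Add C (Add C b' (Neg C x)) (Neg C (Add C a' (Neg C x))) = Add C b' (Neg C a')"
proof -
  have na: "Neg C a' \<in> Hom C a b" and nx: "Neg C x \<in> Hom C a b" using a x by (simp_all add: pneg_closed)
  have "Add C (Add C b' (Neg C x)) (Neg C (Add C a' (Neg C x))) = Add C (Add C b' (Neg C x)) (Add C x (Neg C a'))"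
    using pneg_diff[OF a x] by simp
  also have "\<dots> = Add C b' (Add C (Neg C x) (Add C x (Neg C a')))"
    using padd_assoc[OF b nx padd_closed[OF x na]] .
  also have "Add C (Neg C x) (Add C x (Neg C a')) = Neg C a'"
    using padd_assoc[OF nx x na, symmetric] pneg_add_self[OF x] pzero_add[OF na] by simp
  finally show ?thesis .
qed

end

context
  fixes C :: "('o,'m) preadd_cat" and Mo :: "nat \<Rightarrow> 'o" and Mf :: "nat \<Rightarrow> nat \<Rightarrow> (int \<Rightarrow> int) \<Rightarrow> 'm"
  assumes PA: "preadditive C" and DM: "duplicial C Mo Mf"
begin

lemma Mf_hom: "lam_hom m n f \<Longrightarrow> Mf m n f \<in> Hom C (Mo n) (Mo m)"
  using conjunct1[OF DM[unfolded duplicial_def]] by blast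

lemma Mf_comp: "lam_hom l m f \<Longrightarrow> lam_hom m n g \<Longrightarrow> Mf l n (g \<circ> f) = Comp C (Mf l m f) (Mf m n g)"
  using conjunct2[OF conjunct2[OF DM[unfolded duplicial_def]]] by blast

lemma tripL: assumes f: "lam_hom a b f" and g: "lam_hom b c g" and h: "lam_hom c d h"
  shows "Comp C (Comp C (Mf a b f) (Mf b c g)) (Mf c d h) = Mf a d (h \<circ> g \<circ> f)"
proof -
  have e1: "Mf a d (h \<circ> (g \<circ> f)) = Comp C (Mf a c (g \<circ> f)) (Mf c d h)"
    using Mf_comp[OF lam_hom_comp[OF f g] h] .
  have e2: "Mf a c (g \<circ> f) = Comp C (Mf a b f) (Mf b c g)" using Mf_comp[OF f g] .
  have e3: "h \<circ> (g \<circ> f) = h \<circ> g \<circ> f" by (rule o_assoc)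
  have "Mf a d (h \<circ> g \<circ> f) = Comp C (Comp C (Mf a b f) (Mf b c g)) (Mf c d h)"
    unfolding e3[symmetric] e1 e2 ..
  then show ?thesis by (rule sym)
qed

lemma tripR: assumes f: "lam_hom a b f" and g: "lam_hom b c g" and h: "lam_hom c d h"
  shows "Comp C (Mf a b f) (Comp C (Mf b c g) (Mf c d h)) = Mf a d (h \<circ> g \<circ> f)"
  using pcomp_assoc[OF PA Mf_hom[OF h] Mf_hom[OF g] Mf_hom[OF f]] tripL[OF f g h] by simp

lemma kappa_Suc: "kappa C Mf (n+1) = (let x = Add C (Comp C (Mf (n+1) (n+2) (eps (n+2) 0)) (Mf (n+2) (n+1) (eta (n+1) (n+2))))
     (Neg C (Comp C (Mf (n+1) n (eta n (n+1))) (Mf n (n+1) (eps (n+1) 0)))) in if even n then Neg C x else x)"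
  unfolding kappa_def dface_def sdeg_def Let_def
  apply (simp only: add_diff_cancel_right' add.assoc one_add_one)
  by simp

lemma kappa_pos: "0 < n \<Longrightarrow> kappa C Mf n = (let x = Add C (Comp C (Mf n (n+1) (eps (n+1) 0)) (Mf (n+1) n (eta n (n+1))))
     (Neg C (Comp C (Mf n (n-1) (eta (n-1) n)) (Mf (n-1) n (eps n 0)))) in if even n then x else Neg C x)"
  unfolding kappa_def dface_def sdeg_def Let_def
  by simp

lemma kappa_0: "kappa C Mf 0 = Comp C (Mf 0 1 (eps 1 0)) (Mf 1 0 (eta 0 1))"
  unfolding kappa_def dface_def sdeg_def by simp


lemma LHS:
  assumes i: "i \<le> n + 1"
  shows "Comp C (kappa C Mf (n + 1)) (sdeg Mf n i) =
    (let LX = Add C (Mf (n+1) n (eta n i \<circ> eta (n+1) (n+2) \<circ> eps (n+2) 0))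
                    (Neg C (Mf (n+1) n (eta n i \<circ> eps (n+1) 0 \<circ> eta n (n+1))))
     in if even n then Neg C LX else LX)"
proof -
  note h1 = le1[of n 0] and h2 = lt1[of n "n+2"] and h3 = lam_hom_eta[of n i]
  note h4 = lam_hom_eta[of n "n+1"] and h5 = le2[of n 0]
  have P: "sdeg Mf n i = Mf (n+1) n (eta n i)" unfolding sdeg_def ..
  have hP: "Mf (n+1) n (eta n i) \<in> Hom C (Mo n) (Mo (n+1))" using Mf_hom[OF h3] .
  have ab: "Comp C (Mf (n+1) (n+2) (eps (n+2) 0)) (Mf (n+2) (n+1) (eta (n+1) (n+2))) \<in> Hom C (Mo (n+1)) (Mo (n+1))"
    using pcomp_closed[OF PA Mf_hom[OF h2] Mf_hom[OF h1]] .
  have cd: "Comp C (Mf (n+1) n (eta n (n+1))) (Mf n (n+1) (eps (n+1) 0)) \<in> Hom C (Mo (n+1)) (Mo (n+1))"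
    using pcomp_closed[OF PA Mf_hom[OF h5] Mf_hom[OF h4]] .
  have ncd: "Neg C (Comp C (Mf (n+1) n (eta n (n+1))) (Mf n (n+1) (eps (n+1) 0))) \<in> Hom C (Mo (n+1)) (Mo (n+1))"
    using pneg_closed[OF PA cd] .
  have x: "Comp C (Add C (Comp C (Mf (n+1) (n+2) (eps (n+2) 0)) (Mf (n+2) (n+1) (eta (n+1) (n+2))))
     (Neg C (Comp C (Mf (n+1) n (eta n (n+1))) (Mf n (n+1) (eps (n+1) 0))))) (Mf (n+1) n (eta n i))
     = Add C (Mf (n+1) n (eta n i \<circ> eta (n+1) (n+2) \<circ> eps (n+2) 0))
                    (Neg C (Mf (n+1) n (eta n i \<circ> eps (n+1) 0 \<circ> eta n (n+1))))"
    using pcomp_add_left[OF PA hP ab ncd] pcomp_neg_left[OF PA hP cd] tripL[OF h1 h2 h3] tripL[OF h4 h5 h3] by simp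
  have xh: "Add C (Comp C (Mf (n+1) (n+2) (eps (n+2) 0)) (Mf (n+2) (n+1) (eta (n+1) (n+2))))
     (Neg C (Comp C (Mf (n+1) n (eta n (n+1))) (Mf n (n+1) (eps (n+1) 0)))) \<in> Hom C (Mo (n+1)) (Mo (n+1))"
    using padd_closed[OF PA ab ncd] .
  show ?thesis unfolding kappa_Suc P Let_def using x pcomp_neg_left[OF PA hP xh] by simp
qed

lemma mainL:
  assumes i: "i \<le> n + 1"
  shows "Comp C (kappa C Mf (n + 1)) (sdeg Mf n i) =
    (if i = 0 then Zero C (Mo n) (Mo (n + 1))
     else if i \<le> n then Neg C (Comp C (sdeg Mf n (i - 1)) (kappa C Mf n))
     else Comp C (Add C (sdeg Mf n (n + 1)) (Neg C (sdeg Mf n n))) (kappa C Mf n))"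
proof -
  note h1 = le1[of n 0] and h2 = lt1[of n "n+2"]
  note h4 = lam_hom_eta[of n "n+1"] and h5 = le2[of n 0]
  define LX where "LX = Add C (Mf (n+1) n (eta n i \<circ> eta (n+1) (n+2) \<circ> eps (n+2) 0))
                    (Neg C (Mf (n+1) n (eta n i \<circ> eps (n+1) 0 \<circ> eta n (n+1))))"
  have L: "Comp C (kappa C Mf (n + 1)) (sdeg Mf n i) = (if even n then Neg C LX else LX)"
    using LHS[OF i] unfolding LX_def Let_def by simp
  have hA: "Mf (n+1) n (eta n i \<circ> eta (n+1) (n+2) \<circ> eps (n+2) 0) \<in> Hom C (Mo n) (Mo (n+1))"
    by (rule Mf_hom, rule lam_hom_comp[OF h1 lam_hom_comp[OF h2 lam_hom_eta]])
  have hB: "Mf (n+1) n (eta n i \<circ> eps (n+1) 0 \<circ> eta n (n+1)) \<in> Hom C (Mo n) (Mo (n+1))"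
    by (rule Mf_hom, rule lam_hom_comp[OF h4 lam_hom_comp[OF h5 lam_hom_eta]])
  have hLX: "LX \<in> Hom C (Mo n) (Mo (n+1))" unfolding LX_def using padd_closed[OF PA hA pneg_closed[OF PA hB]] .
  have hd: "Mf n (n+1) (eps (n+1) 0) \<in> Hom C (Mo (n+1)) (Mo n)" using Mf_hom[OF h5] .
  have hc: "Mf (n+1) n (eta n (n+1)) \<in> Hom C (Mo n) (Mo (n+1))" using Mf_hom[OF h4] .
  have hdc: "Comp C (Mf n (n+1) (eps (n+1) 0)) (Mf (n+1) n (eta n (n+1))) \<in> Hom C (Mo n) (Mo n)"
    using pcomp_closed[OF PA hc hd] .
  show ?thesis
  proof (cases "i = 0")
    case True
    have "LX = Zero C (Mo n) (Mo (n+1))" unfolding LX_def using True I0[of n] padd_neg[OF PA hA] by simp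
    then show ?thesis using L True pneg_zero[OF PA] by simp
  next
    case i0: False
    show ?thesis
    proof (cases "i \<le> n")
      case True
      have n: "0 < n" using True i0 by simp
      note h6 = lt3[OF n, of n] and h7 = lam_hom_eps[OF n, of 0] and hq = lam_hom_eta[of n "i-1"]
      have hs3: "Mf n (n-1) (eta (n-1) n) \<in> Hom C (Mo (n-1)) (Mo n)" using Mf_hom[OF h6] .
      have hd0: "Mf (n-1) n (eps n 0) \<in> Hom C (Mo n) (Mo (n-1))" using Mf_hom[OF h7] .
      have hsd: "Comp C (Mf n (n-1) (eta (n-1) n)) (Mf (n-1) n (eps n 0)) \<in> Hom C (Mo n) (Mo n)"
        using pcomp_closed[OF PA hd0 hs3] .
      have hQ: "Mf (n+1) n (eta n (i-1)) \<in> Hom C (Mo n) (Mo (n+1))" using Mf_hom[OF hq] .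
      define K where "K = Add C (Comp C (Mf n (n+1) (eps (n+1) 0)) (Mf (n+1) n (eta n (n+1))))
        (Neg C (Comp C (Mf n (n-1) (eta (n-1) n)) (Mf (n-1) n (eps n 0))))"
      have hK: "K \<in> Hom C (Mo n) (Mo n)" unfolding K_def using padd_closed[OF PA hdc pneg_closed[OF PA hsd]] .
      have kn: "kappa C Mf n = (if even n then K else Neg C K)" using kappa_pos[OF n] unfolding K_def Let_def by simp
      have QK: "Comp C (Mf (n+1) n (eta n (i-1))) K = LX"
        unfolding K_def LX_def
        using pcomp_add_right[OF PA hdc pneg_closed[OF PA hsd] hQ] pcomp_neg_right[OF PA hsd hQ]
          tripR[OF hq h5 h4] tripR[OF hq h6 h7] IA[of i n] IB[of i n] i0 True by simp
      have "Neg C (Comp C (sdeg Mf n (i - 1)) (kappa C Mf n)) = (if even n then Neg C LX else LX)"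
        unfolding sdeg_def kn using QK pcomp_neg_right[OF PA hK hQ] pneg_neg[OF PA hLX] by simp
      then show ?thesis using L i0 True by simp
    next
      case False
      then have ii: "i = n + 1" using i by simp
      have hp: "Mf (n+1) n (eta n (n+1)) \<in> Hom C (Mo n) (Mo (n+1))" using Mf_hom[OF h4] .
      have hq: "Mf (n+1) n (eta n n) \<in> Hom C (Mo n) (Mo (n+1))" using Mf_hom[OF lam_hom_eta] .
      have hpq: "Add C (Mf (n+1) n (eta n (n+1))) (Neg C (Mf (n+1) n (eta n n))) \<in> Hom C (Mo n) (Mo (n+1))"
        using padd_closed[OF PA hp pneg_closed[OF PA hq]] .
      have pqdc: "Comp C (Add C (Mf (n+1) n (eta n (n+1))) (Neg C (Mf (n+1) n (eta n n))))
           (Comp C (Mf n (n+1) (eps (n+1) 0)) (Mf (n+1) n (eta n (n+1)))) = Neg C LX"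
        unfolding LX_def ii
        using pcomp_add_left[OF PA hdc hp pneg_closed[OF PA hq]] pcomp_neg_left[OF PA hdc hq]
          tripR[OF h4 h5 h4] tripR[OF lam_hom_eta[of n n] h5 h4] IY[of n]
          pneg_diff[OF PA hA[unfolded ii] hB[unfolded ii]] by simp
      show ?thesis
      proof (cases "n = 0")
        case True
        have "Comp C (Add C (sdeg Mf n (n + 1)) (Neg C (sdeg Mf n n))) (kappa C Mf n) = Neg C LX"
          using pqdc True kappa_0 unfolding sdeg_def by (simp add: One_nat_def)
        then show ?thesis using L True ii by simp
      next
        case False
        then have n: "0 < n" by simp
        note h6 = lt3[OF n, of n] and h7 = lam_hom_eps[OF n, of 0]
        have hs3: "Mf n (n-1) (eta (n-1) n) \<in> Hom C (Mo (n-1)) (Mo n)" using Mf_hom[OF h6] .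
        have hd0: "Mf (n-1) n (eps n 0) \<in> Hom C (Mo n) (Mo (n-1))" using Mf_hom[OF h7] .
        have hsd: "Comp C (Mf n (n-1) (eta (n-1) n)) (Mf (n-1) n (eps n 0)) \<in> Hom C (Mo n) (Mo n)"
          using pcomp_closed[OF PA hd0 hs3] .
        define K where "K = Add C (Comp C (Mf n (n+1) (eps (n+1) 0)) (Mf (n+1) n (eta n (n+1))))
          (Neg C (Comp C (Mf n (n-1) (eta (n-1) n)) (Mf (n-1) n (eps n 0))))"
        have hK: "K \<in> Hom C (Mo n) (Mo n)" unfolding K_def using padd_closed[OF PA hdc pneg_closed[OF PA hsd]] .
        have kn: "kappa C Mf n = (if even n then K else Neg C K)" using kappa_pos[OF n] unfolding K_def Let_def by simp
        define X where "X = Mf (n+1) n (eps n 0 \<circ> eta (n-1) n \<circ> eta n (n+1))"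
        have hX: "X \<in> Hom C (Mo n) (Mo (n+1))" unfolding X_def
          by (rule Mf_hom, rule lam_hom_comp[OF lam_hom_eta lam_hom_comp[OF h6 h7]])
        have pK: "Comp C (Mf (n+1) n (eta n (n+1))) K = Add C (Mf (n+1) n (eta n (n+1) \<circ> eps (n+1) 0 \<circ> eta n (n+1))) (Neg C X)"
          unfolding K_def X_def
          using pcomp_add_right[OF PA hdc pneg_closed[OF PA hsd] hp] pcomp_neg_right[OF PA hsd hp]
            tripR[OF h4 h5 h4] tripR[OF h4 h6 h7] by simp
        have qK: "Comp C (Mf (n+1) n (eta n n)) K = Add C (Mf (n+1) n (eta n (n+1) \<circ> eta (n+1) (n+2) \<circ> eps (n+2) 0)) (Neg C X)"
          unfolding K_def X_def
          using pcomp_add_right[OF PA hdc pneg_closed[OF PA hsd] hq] pcomp_neg_right[OF PA hsd hq]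
            tripR[OF lam_hom_eta[of n n] h5 h4] tripR[OF lam_hom_eta[of n n] h6 h7] IY[of n] IX[of n] n by simp
        have pqK: "Comp C (Add C (Mf (n+1) n (eta n (n+1))) (Neg C (Mf (n+1) n (eta n n)))) K = Neg C LX"
          unfolding LX_def ii
          using pcomp_add_left[OF PA hK hp pneg_closed[OF PA hq]] pcomp_neg_left[OF PA hK hq] pK qK
            pdiff_diff[OF PA hA[unfolded ii] hB[unfolded ii] hX]
            pneg_diff[OF PA hA[unfolded ii] hB[unfolded ii]] by simp
        have "Comp C (Add C (sdeg Mf n (n + 1)) (Neg C (sdeg Mf n n))) (kappa C Mf n) = (if even n then Neg C LX else LX)"
          unfolding sdeg_def kn using pqK pcomp_neg_right[OF PA hK hpq] pneg_neg[OF PA hLX] by simp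
        then show ?thesis using L ii by simp
      qed
    qed
  qed
qed
end

theorem mainTheorem11:
  fixes C :: "('o,'m) preadd_cat" and Mo :: "nat \<Rightarrow> 'o"
    and Mf :: "nat \<Rightarrow> nat \<Rightarrow> (int \<Rightarrow> int) \<Rightarrow> 'm" and n i :: nat
  assumes "preadditive C" and "duplicial C Mo Mf" and "i \<le> n + 1"
  shows "Comp C (kappa C Mf (n + 1)) (sdeg Mf n i) =
    (if i = 0 then Zero C (Mo n) (Mo (n + 1))
     else if i \<le> n then Neg C (Comp C (sdeg Mf n (i - 1)) (kappa C Mf n))
     else Comp C (Add C (sdeg Mf n (n + 1)) (Neg C (sdeg Mf n n))) (kappa C Mf n))"
  by (rule mainL[OF assms])

end
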